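(* On the group $G_{\mathtt{ALD}}$ define binary operations $g*h:=g\cdot\mathrm{sh}_1(h)\cdot S_\varepsilon\cdot\mathrm{sh}_1(g)^{-1}$ and $g\circ h:=g\cdot\mathrm{sh}_1(h)\cdot A_\varepsilon$. Then for all $g,h,k\in G_{\mathtt{ALD}}$ and $\square\in\{*,\circ\}$: $(g*h)\,\square\,(g*k)=(g*(h\,\square\,k))\cdot S_0$; $(g\circ h)*k=(g*(h*k))\cdot A_0$; $(g\cdot\mathrm{sh}_0(k))\,\square\,h=(g\,\square\,h)\cdot\mathrm{sh}_{00}(k)$; $g\,\square\,(h\cdot\mathrm{sh}_0(k))=(g\,\square\,h)\cdot\mathrm{sh}_{01}(k)$.
   Context: Addresses are finite sequences over $\{0,1\}$, $\varepsilon$ empty, concatenation by juxtaposition; two addresses are incomparable if neither is a prefix of the other. $G_{\mathtt{ALD}}$ is the group generated by elements $S_\alpha,A_\alpha$ ($\alpha\in\{0,1\}^*$) subject to the following relations, where $X,Y$ each stand for $S$ or $A$ and $\alpha,\beta,\delta$ are arbitrary addresses ($\delta$ possibly empty): $X_\alpha Y_\beta=Y_\beta X_\alpha$ for $\alpha,\beta$ incomparable; $X_{\alpha0\delta}S_\alpha=S_\alpha X_{\alpha00\delta}X_{\alpha10\delta}$; $X_{\alpha10\delta}S_\alpha=S_\alpha X_{\alpha01\delta}$; $X_{\alpha11\delta}S_\alpha=S_\alpha X_{\alpha11\delta}$; $X_{\alpha0\delta}A_\alpha=A_\alpha X_{\alpha00\delta}$; $X_{\alpha10\delta}A_\alpha=A_\alpha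 X_{\alpha01\delta}$; $X_{\alpha11\delta}A_\alpha=A_\alpha X_{\alpha1\delta}$; $S_\alpha S_{\alpha1}S_\alpha=S_{\alpha1}S_\alpha S_{\alpha1}S_{\alpha0}$; $S_\alpha S_{\alpha1}A_\alpha=A_{\alpha1}S_\alpha S_{\alpha0}$; $A_\alpha S_\alpha=S_{\alpha1}S_\alpha A_{\alpha1}A_{\alpha0}$. For an address $\beta$, $\mathrm{sh}_\beta$ is the endomorphism of $G_{\mathtt{ALD}}$ with $S_\alpha\mapsto S_{\beta\alpha}$, $A_\alpha\mapsto A_{\beta\alpha}$. *)

theory Defs
  imports Main "HOL-Library.Sublist"
begin

text \<open>Addresses are lists over bool (False = 0, True = 1); concatenation is append.\<close>
type_synonym addr = "bool list"

datatype gen = S addr | A addr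

text \<open>Letters: (True, x) is the generator x, (False, x) its formal inverse.\<close>
type_synonym word = "(bool \<times> gen) list"

definition incomparable :: "addr \<Rightarrow> addr \<Rightarrow> bool" where
  "incomparable a b \<longleftrightarrow> \<not> prefix a b \<and> \<not> prefix b a"

definition winv :: "word \<Rightarrow> word" where
  "winv w = rev (map (\<lambda>(b, x). (\<not> b, x)) w)"

fun pos :: "gen \<Rightarrow> bool \<times> gen" where "pos x = (True, x)"

inductive rel :: "word \<Rightarrow> word \<Rightarrow> bool" where
  comm: "X \<in> {S, A} \<Longrightarrow> Y \<in> {S, A} \<Longrightarrow> incomparable \<alpha> \<beta> \<Longrightarrow>
     rel [pos (X \<alpha>), pos (Y \<beta>)] [pos (Y \<beta>), pos (X \<alpha>)]"
| r1: "X \<in> {S, A} \<Longrightarrow> rel [pos (X (\<alpha> @ [False] @ \<delta>)), pos (S \<alpha>)]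
     [pos (S \<alpha>), pos (X (\<alpha> @ [False, False] @ \<delta>)), pos (X (\<alpha> @ [True, False] @ \<delta>))]"
| r2: "X \<in> {S, A} \<Longrightarrow> rel [pos (X (\<alpha> @ [True, False] @ \<delta>)), pos (S \<alpha>)]
     [pos (S \<alpha>), pos (X (\<alpha> @ [False, True] @ \<delta>))]"
| r3: "X \<in> {S, A} \<Longrightarrow> rel [pos (X (\<alpha> @ [True, True] @ \<delta>)), pos (S \<alpha>)]
     [pos (S \<alpha>), pos (X (\<alpha> @ [True, True] @ \<delta>))]"
| r4: "X \<in> {S, A} \<Longrightarrow> rel [pos (X (\<alpha> @ [False] @ \<delta>)), pos (A \<alpha>)]
     [pos (A \<alpha>), pos (X (\<alpha> @ [False, False] @ \<delta>))]"
| r5: "X \<in> {S, A} \<Longrightarrow> rel [pos (X (\<alpha> @ [True, False] @ \<delta>)), pos (A \<alpha>)]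
     [pos (A \<alpha>), pos (X (\<alpha> @ [False, True] @ \<delta>))]"
| r6: "X \<in> {S, A} \<Longrightarrow> rel [pos (X (\<alpha> @ [True, True] @ \<delta>)), pos (A \<alpha>)]
     [pos (A \<alpha>), pos (X (\<alpha> @ [True] @ \<delta>))]"
| r7: "rel [pos (S \<alpha>), pos (S (\<alpha> @ [True])), pos (S \<alpha>)]
     [pos (S (\<alpha> @ [True])), pos (S \<alpha>), pos (S (\<alpha> @ [True])), pos (S (\<alpha> @ [False]))]"
| r8: "rel [pos (S \<alpha>), pos (S (\<alpha> @ [True])), pos (A \<alpha>)]
     [pos (A (\<alpha> @ [True])), pos (S \<alpha>), pos (S (\<alpha> @ [False]))]"
| r9: "rel [pos (A \<alpha>), pos (S \<alpha>)]
     [pos (S (\<alpha> @ [True])), pos (S \<alpha>), pos (A (\<alpha> @ [True])), pos (A (\<alpha> @ [False]))]"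

text \<open>The congruence on words defining the presented group: generated by free
  cancellation and the relations, closed under concatenation contexts (and,
  harmlessly, under formal inversion, which holds in any group quotient).\<close>
inductive eqv :: "word \<Rightarrow> word \<Rightarrow> bool" where
  refl: "eqv w w"
| sym: "eqv u v \<Longrightarrow> eqv v u"
| trans: "eqv u v \<Longrightarrow> eqv v w \<Longrightarrow> eqv u w"
| ctx: "eqv u v \<Longrightarrow> eqv (w @ u @ z) (w @ v @ z)"
| inv: "eqv u v \<Longrightarrow> eqv (winv u) (winv v)"
| cancel: "eqv [(b, x), (\<not> b, x)] []"
| rel: "rel u v \<Longrightarrow> eqv u v"

lemma eqv_equivp: "equivp eqv"
  by (rule equivpI; auto intro: reflpI sympI transpI eqv.intros)

quotient_type G_ALD = word / eqv
  by (rule eqv_equivp)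

lemma eqv_append: "eqv u u' \<Longrightarrow> eqv v v' \<Longrightarrow> eqv (u @ v) (u' @ v')"
  using eqv.ctx[of u u' "[]" v] eqv.ctx[of v v' u' "[]"] eqv.trans by auto

lift_definition gmult :: "G_ALD \<Rightarrow> G_ALD \<Rightarrow> G_ALD" (infixl "\<cdot>" 70) is "(@)"
  by (rule eqv_append)

lift_definition ginv :: "G_ALD \<Rightarrow> G_ALD" is winv
  by (rule eqv.inv)

lift_definition gone :: G_ALD is "[]" .

lift_definition gS :: "addr \<Rightarrow> G_ALD" is "\<lambda>a. [(True, S a)]" .
lift_definition gA :: "addr \<Rightarrow> G_ALD" is "\<lambda>a. [(True, A a)]" .

fun shgen :: "addr \<Rightarrow> gen \<Rightarrow> gen" where
  "shgen b (S a) = S (b @ a)"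
| "shgen b (A a) = A (b @ a)"

definition shw :: "addr \<Rightarrow> word \<Rightarrow> word" where
  "shw b w = map (\<lambda>(e, x). (e, shgen b x)) w"

lemma shw_rel: "rel u v \<Longrightarrow> rel (shw b u) (shw b v)"
proof (induction rule: rel.induct)
  case (comm X Y \<alpha> \<beta>)
  have "incomparable (b @ \<alpha>) (b @ \<beta>)" using comm(3) by (simp add: incomparable_def)
  moreover have "shgen b (X \<alpha>) = X (b @ \<alpha>)" "shgen b (Y \<beta>) = Y (b @ \<beta>)"
    using comm(1,2) by auto
  ultimately show ?case using rel.comm[OF comm(1,2)] by (simp add: shw_def)
next
  case (r1 X \<alpha> \<delta>) then show ?case using rel.r1[of X "b @ \<alpha>" \<delta>] by (auto simp: shw_def)
next
  case (r2 X \<alpha> \<delta>) then show ?case using rel.r2[of X "b @ \<alpha>" \<delta>] by (auto simp: shw_def)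
next
  case (r3 X \<alpha> \<delta>) then show ?case using rel.r3[of X "b @ \<alpha>" \<delta>] by (auto simp: shw_def)
next
  case (r4 X \<alpha> \<delta>) then show ?case using rel.r4[of X "b @ \<alpha>" \<delta>] by (auto simp: shw_def)
next
  case (r5 X \<alpha> \<delta>) then show ?case using rel.r5[of X "b @ \<alpha>" \<delta>] by (auto simp: shw_def)
next
  case (r6 X \<alpha> \<delta>) then show ?case using rel.r6[of X "b @ \<alpha>" \<delta>] by (auto simp: shw_def)
next
  case (r7 \<alpha>) then show ?case using rel.r7[of "b @ \<alpha>"] by (auto simp: shw_def)
next
  case (r8 \<alpha>) then show ?case using rel.r8[of "b @ \<alpha>"] by (auto simp: shw_def)
next
  case (r9 \<alpha>) then show ?case using rel.r9[of "b @ \<alpha>"] by (auto simp: shw_def)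
qed

lemma shw_winv: "shw b (winv u) = winv (shw b u)"
  by (simp add: shw_def winv_def rev_map case_prod_beta comp_def)

lemma shw_eqv: "eqv u v \<Longrightarrow> eqv (shw b u) (shw b v)"
proof (induction rule: eqv.induct)
  case (inv u v) then show ?case using eqv.inv by (simp add: shw_winv)
next
  case (cancel c x) then show ?case using eqv.cancel by (simp add: shw_def)
qed (auto simp: shw_def intro: eqv.intros shw_rel[unfolded shw_def])

lift_definition sh :: "addr \<Rightarrow> G_ALD \<Rightarrow> G_ALD" is shw
  by (rule shw_eqv)

definition star :: "G_ALD \<Rightarrow> G_ALD \<Rightarrow> G_ALD" where
  "star g h = g \<cdot> sh [True] h \<cdot> gS [] \<cdot> ginv (sh [True] g)"

definition circ :: "G_ALD \<Rightarrow> G_ALD \<Rightarrow> G_ALD" where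
  "circ g h = g \<cdot> sh [True] h \<cdot> gA []"

end

theory Submission
  imports Defs "HOL-Library.Sublist"
begin


lemma ga: "(a \<cdot> b) \<cdot> c = a \<cdot> (b \<cdot> c)"
  by (induct a rule: G_ALD.abs_induct, induct b rule: G_ALD.abs_induct,
      induct c rule: G_ALD.abs_induct) (simp add: gmult.abs_eq)

lemma one_l[simp]: "gone \<cdot> a = a"
  by (induct a rule: G_ALD.abs_induct) (simp add: gmult.abs_eq gone.abs_eq)
lemma one_r[simp]: "a \<cdot> gone = a"
  by (induct a rule: G_ALD.abs_induct) (simp add: gmult.abs_eq gone.abs_eq)

lemma winv_cons: "winv (x # w) = winv w @ [(\<not> fst x, snd x)]"
  by (simp add: winv_def case_prod_beta)

lemma eqv_l: "eqv (winv w @ w) []"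
proof (induct w)
  case Nil then show ?case by (simp add: winv_def eqv.refl)
next
  case (Cons x w)
  have "eqv (winv w @ [(\<not> fst x, snd x), (\<not>\<not> fst x, snd x)] @ w) (winv w @ [] @ w)"
    by (rule eqv.ctx, rule eqv.cancel)
  then have "eqv (winv (x#w) @ x # w) (winv w @ w)" by (simp add: winv_cons)
  then show ?case using Cons eqv.trans by blast
qed

lemma eqv_r: "eqv (w @ winv w) []"
proof (induct w)
  case Nil then show ?case by (simp add: winv_def eqv.refl)
next
  case (Cons x w)
  have "eqv ([x] @ (w @ winv w) @ [(\<not> fst x, snd x)]) ([x] @ [] @ [(\<not> fst x, snd x)])"
    by (rule eqv.ctx, rule Cons)
  moreover have "eqv [(fst x, snd x), (\<not> fst x, snd x)] []" by (rule eqv.cancel)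
  ultimately have "eqv ((x#w) @ winv (x#w)) []" using eqv.trans by (simp add: winv_cons)
  then show ?case .
qed

lemma inv_l[simp]: "ginv a \<cdot> a = gone"
  by (induct a rule: G_ALD.abs_induct) (simp add: gmult.abs_eq gone.abs_eq ginv.abs_eq G_ALD.abs_eq_iff eqv_l)
lemma inv_r[simp]: "a \<cdot> ginv a = gone"
  by (induct a rule: G_ALD.abs_induct) (simp add: gmult.abs_eq gone.abs_eq ginv.abs_eq G_ALD.abs_eq_iff eqv_r)
lemma inv_l2[simp]: "ginv a \<cdot> (a \<cdot> b) = b" by (simp flip: ga)
lemma inv_r2[simp]: "a \<cdot> (ginv a \<cdot> b) = b" by (simp flip: ga)

lemma ginv_mult[simp]: "ginv (a \<cdot> b) = ginv b \<cdot> ginv a"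
  by (induct a rule: G_ALD.abs_induct, induct b rule: G_ALD.abs_induct)
     (simp add: gmult.abs_eq ginv.abs_eq winv_def)
lemma ginv_ginv[simp]: "ginv (ginv a) = a"
  by (induct a rule: G_ALD.abs_induct) (simp add: ginv.abs_eq winv_def rev_map comp_def case_prod_beta)
lemma ginv_one[simp]: "ginv gone = gone"
  by (simp add: ginv.abs_eq gone.abs_eq winv_def)

lemma sh_mult[simp]: "sh b (x \<cdot> y) = sh b x \<cdot> sh b y"
  by (induct x rule: G_ALD.abs_induct, induct y rule: G_ALD.abs_induct)
     (simp add: gmult.abs_eq sh.abs_eq shw_def)
lemma sh_inv[simp]: "sh b (ginv x) = ginv (sh b x)"
  by (induct x rule: G_ALD.abs_induct) (simp add: ginv.abs_eq sh.abs_eq shw_winv)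
lemma sh_one[simp]: "sh b gone = gone"
  by (simp add: sh.abs_eq gone.abs_eq shw_def)
lemma shgen_shgen: "shgen b (shgen c y) = shgen (b @ c) y" by (cases y) auto
lemma sh_sh[simp]: "sh b (sh c x) = sh (b @ c) x"
  by (induct x rule: G_ALD.abs_induct) (simp add: sh.abs_eq shw_def shgen_shgen split_def comp_def)
lemma sh_S[simp]: "sh b (gS a) = gS (b @ a)"
  by (simp add: sh.abs_eq gS.abs_eq shw_def)
lemma sh_A[simp]: "sh b (gA a) = gA (b @ a)"
  by (simp add: sh.abs_eq gA.abs_eq shw_def)

lemma G_induct:
  assumes "P gone"
    and "\<And>x a. P x \<Longrightarrow> P (gS a \<cdot> x)" "\<And>x a. P x \<Longrightarrow> P (gA a \<cdot> x)"
    and "\<And>x a. P x \<Longrightarrow> P (ginv (gS a) \<cdot> x)" "\<And>x a. P x \<Longrightarrow> P (ginv (gA a) \<cdot> x)"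
  shows "P x"
proof (induct x rule: G_ALD.abs_induct)
  case (1 w)
  show ?case
  proof (induct w)
    case Nil then show ?case using assms(1) by (simp add: gone.abs_eq)
  next
    case (Cons l w)
    obtain b y where l: "l = (b, y)" by (cases l)
    have e: "abs_G_ALD (l # w) = abs_G_ALD [(b, y)] \<cdot> abs_G_ALD w" by (simp add: gmult.abs_eq l)
    show ?case
    proof (cases y)
      case (S a) then show ?thesis using e Cons assms(2,4)
        by (cases b) (auto simp: gS.abs_eq ginv.abs_eq winv_def)
    next
      case (A a) then show ?thesis using e Cons assms(3,5)
        by (cases b) (auto simp: gA.abs_eq ginv.abs_eq winv_def)
    qed
  qed
qed




lemma inv_conj: assumes "u \<cdot> c = c \<cdot> v" shows "ginv u \<cdot> c = c \<cdot> ginv v"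
proof -
  have "ginv u \<cdot> c = ginv u \<cdot> (c \<cdot> v) \<cdot> ginv v" by (simp add: ga)
  also have "\<dots> = ginv u \<cdot> (u \<cdot> c) \<cdot> ginv v" using assms by simp
  also have "\<dots> = c \<cdot> ginv v" by (simp add: ga)
  finally show ?thesis .
qed

lemma conj_ext:
  assumes pm: "\<And>x y. \<phi> (x \<cdot> y) = \<phi> x \<cdot> \<phi> y" and pi: "\<And>x. \<phi> (ginv x) = ginv (\<phi> x)"
    and po: "\<phi> gone = gone"
    and qm: "\<And>x y. \<psi> (x \<cdot> y) = \<psi> x \<cdot> \<psi> y" and qi: "\<And>x. \<psi> (ginv x) = ginv (\<psi> x)"
    and qo: "\<psi> gone = gone"
    and gs: "\<And>a. \<phi> (gS a) \<cdot> c = c \<cdot> \<psi> (gS a)"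
    and ga': "\<And>a. \<phi> (gA a) \<cdot> c = c \<cdot> \<psi> (gA a)"
  shows "\<phi> x \<cdot> c = c \<cdot> \<psi> x"
proof -
  have step: "\<phi> (g \<cdot> x) \<cdot> c = c \<cdot> \<psi> (g \<cdot> x)"
    if h1: "\<phi> g \<cdot> c = c \<cdot> \<psi> g" and h2: "\<phi> x \<cdot> c = c \<cdot> \<psi> x" for g x
  proof -
    have "\<phi> (g \<cdot> x) \<cdot> c = \<phi> g \<cdot> (\<phi> x \<cdot> c)" by (simp add: pm ga)
    also have "\<dots> = (\<phi> g \<cdot> c) \<cdot> \<psi> x" using h2 by (simp add: ga)
    also have "\<dots> = c \<cdot> \<psi> (g \<cdot> x)" using h1 by (simp add: ga qm)
    finally show ?thesis .
  qed
  show ?thesis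
  proof (induct x rule: G_induct)
    case 1 then show ?case by (simp add: po qo)
  next
    case (2 x a) then show ?case using step gs by blast
  next
    case (3 x a) then show ?case using step ga' by blast
  next
    case (4 x a)
    have "\<phi> (ginv (gS a)) \<cdot> c = c \<cdot> \<psi> (ginv (gS a))"
      using inv_conj[OF gs[of a]] by (simp only: pi qi)
    then show ?case using 4 step by blast
  next
    case (5 x a)
    have "\<phi> (ginv (gA a)) \<cdot> c = c \<cdot> \<psi> (ginv (gA a))"
      using inv_conj[OF ga'[of a]] by (simp only: pi qi)
    then show ?case using 5 step by blast
  qed
qed



lemma rel_abs: "rel u v \<Longrightarrow> abs_G_ALD u = abs_G_ALD v"
  by (simp add: G_ALD.abs_eq_iff eqv.rel)

lemma incomp_app: "incomparable a b \<Longrightarrow> incomparable (a @ c) (b @ d)"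
proof -
  assume h: "incomparable a b"
  have "False" if "prefix (x @ e) (y @ f)" "incomparable x y" for x y e f :: addr
  proof -
    have "prefix x (y @ f)" using that(1) by (meson prefix_order.dual_order.trans prefixI)
    moreover have "prefix y (y @ f)" by simp
    ultimately have "prefix x y \<or> prefix y x" by (rule prefix_same_cases)
    then show False using that(2) unfolding incomparable_def by blast
  qed
  moreover have "incomparable b a" using h unfolding incomparable_def by blast
  ultimately show ?thesis using h unfolding incomparable_def by blast
qed

lemma gen_comm:
  assumes "incomparable a b" "X \<in> {S, A}" "Y \<in> {S, A}"
  shows "abs_G_ALD [(True, X a)] \<cdot> abs_G_ALD [(True, Y b)] = abs_G_ALD [(True, Y b)] \<cdot> abs_G_ALD [(True, X a)]"
  using rel_abs[OF rel.comm[OF assms(2,3,1)]] by (simp add: gmult.abs_eq)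


lemma cm_gen:
  assumes "incomparable a b"
  shows "gS a \<cdot> gS b = gS b \<cdot> gS a" "gS a \<cdot> gA b = gA b \<cdot> gS a"
        "gA a \<cdot> gS b = gS b \<cdot> gA a" "gA a \<cdot> gA b = gA b \<cdot> gA a"
  using gen_comm[OF assms] by (auto simp: gS.abs_eq gA.abs_eq)

lemma cm_sh1:
  assumes "incomparable a b"
  shows "sh b y \<cdot> gS a = gS a \<cdot> sh b y" "sh b y \<cdot> gA a = gA a \<cdot> sh b y"
proof -
  have i: "incomparable a (b @ c)" for c using incomp_app[OF assms, of "[]" c] by simp
  show "sh b y \<cdot> gS a = gS a \<cdot> sh b y"
    by (rule conj_ext[where \<phi>="sh b" and \<psi>="sh b"]) (simp_all add: cm_gen[OF i, symmetric])
  show "sh b y \<cdot> gA a = gA a \<cdot> sh b y"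
    by (rule conj_ext[where \<phi>="sh b" and \<psi>="sh b"]) (simp_all add: cm_gen[OF i, symmetric])
qed


lemma cm_sh:
  assumes "incomparable a b"
  shows "sh a x \<cdot> sh b y = sh b y \<cdot> sh a x"
proof -
  have i: "incomparable (a @ c) b" for c using incomp_app[OF assms, of c "[]"] by simp
  show ?thesis
    by (rule conj_ext[where \<phi>="sh a" and \<psi>="sh a"]) (simp_all add: cm_sh1[OF i, symmetric])
qed


lemma conj2:
  assumes i: "incomparable q r"
    and gs: "\<And>a. \<phi> (gS a) \<cdot> c = c \<cdot> (gS (q @ a) \<cdot> gS (r @ a))"
    and ga': "\<And>a. \<phi> (gA a) \<cdot> c = c \<cdot> (gA (q @ a) \<cdot> gA (r @ a))"
    and pm: "\<And>x y. \<phi> (x \<cdot> y) = \<phi> x \<cdot> \<phi> y" and pi: "\<And>x. \<phi> (ginv x) = ginv (\<phi> x)"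
    and po: "\<phi> gone = gone"
  shows "\<phi> x \<cdot> c = c \<cdot> (sh q x \<cdot> sh r x)"
proof (rule conj_ext[where \<psi>="\<lambda>k. sh q k \<cdot> sh r k", OF pm pi po])
  fix x y
  have "sh q y \<cdot> (sh r x \<cdot> sh r y) = sh r x \<cdot> (sh q y \<cdot> sh r y)"
    using cm_sh[OF i, of y x] by (simp flip: ga)
  then show "sh q (x \<cdot> y) \<cdot> sh r (x \<cdot> y) = (sh q x \<cdot> sh r x) \<cdot> (sh q y \<cdot> sh r y)"
    by (simp add: ga)
next
  fix x
  show "sh q (ginv x) \<cdot> sh r (ginv x) = ginv (sh q x \<cdot> sh r x)"
    using cm_sh[OF i, of "ginv x" "ginv x"] by simp
qed (simp_all add: gs ga')

lemma c1: "sh [False] k \<cdot> gS [] = gS [] \<cdot> (sh [False, False] k \<cdot> sh [True, False] k)"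
proof (rule conj2)
  show "incomparable [False, False] [True, False]" by (simp add: incomparable_def)
  fix a
  show "sh [False] (gS a) \<cdot> gS [] = gS [] \<cdot> (gS ([False, False] @ a) \<cdot> gS ([True, False] @ a))"
    using rel_abs[OF rel.r1[of S "[]" a]] by (simp add: gS.abs_eq gmult.abs_eq sh.abs_eq shw_def)
  show "sh [False] (gA a) \<cdot> gS [] = gS [] \<cdot> (gA ([False, False] @ a) \<cdot> gA ([True, False] @ a))"
    using rel_abs[OF rel.r1[of A "[]" a]] by (simp add: gS.abs_eq gA.abs_eq gmult.abs_eq sh.abs_eq shw_def)
qed simp_all

lemma conj1:
  assumes "\<And>a. sh p (gS a) \<cdot> c = c \<cdot> sh q (gS a)" "\<And>a. sh p (gA a) \<cdot> c = c \<cdot> sh q (gA a)"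
  shows "sh p x \<cdot> c = c \<cdot> sh q x"
  by (rule conj_ext[where \<phi>="sh p" and \<psi>="sh q"]) (simp_all only: assms sh_mult sh_inv sh_one)

lemma c2: "sh [True, False] k \<cdot> gS [] = gS [] \<cdot> sh [False, True] k"
proof (rule conj1)
  fix a
  show "sh [True, False] (gS a) \<cdot> gS [] = gS [] \<cdot> sh [False, True] (gS a)"
    using rel_abs[OF rel.r2[of S "[]" a]] by (simp add: gS.abs_eq gmult.abs_eq sh.abs_eq shw_def)
  show "sh [True, False] (gA a) \<cdot> gS [] = gS [] \<cdot> sh [False, True] (gA a)"
    using rel_abs[OF rel.r2[of A "[]" a]] by (simp add: gS.abs_eq gA.abs_eq gmult.abs_eq sh.abs_eq shw_def)
qed

lemma c3: "sh [True, True] k \<cdot> gS [] = gS [] \<cdot> sh [True, True] k"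
proof (rule conj1)
  fix a
  show "sh [True, True] (gS a) \<cdot> gS [] = gS [] \<cdot> sh [True, True] (gS a)"
    using rel_abs[OF rel.r3[of S "[]" a]] by (simp add: gS.abs_eq gmult.abs_eq sh.abs_eq shw_def)
  show "sh [True, True] (gA a) \<cdot> gS [] = gS [] \<cdot> sh [True, True] (gA a)"
    using rel_abs[OF rel.r3[of A "[]" a]] by (simp add: gS.abs_eq gA.abs_eq gmult.abs_eq sh.abs_eq shw_def)
qed

lemma c4: "sh [False] k \<cdot> gA [] = gA [] \<cdot> sh [False, False] k"
proof (rule conj1)
  fix a
  show "sh [False] (gS a) \<cdot> gA [] = gA [] \<cdot> sh [False, False] (gS a)"
    using rel_abs[OF rel.r4[of S "[]" a]] by (simp add: gS.abs_eq gA.abs_eq gmult.abs_eq sh.abs_eq shw_def)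
  show "sh [False] (gA a) \<cdot> gA [] = gA [] \<cdot> sh [False, False] (gA a)"
    using rel_abs[OF rel.r4[of A "[]" a]] by (simp add: gA.abs_eq gmult.abs_eq sh.abs_eq shw_def)
qed

lemma c5: "sh [True, False] k \<cdot> gA [] = gA [] \<cdot> sh [False, True] k"
proof (rule conj1)
  fix a
  show "sh [True, False] (gS a) \<cdot> gA [] = gA [] \<cdot> sh [False, True] (gS a)"
    using rel_abs[OF rel.r5[of S "[]" a]] by (simp add: gS.abs_eq gA.abs_eq gmult.abs_eq sh.abs_eq shw_def)
  show "sh [True, False] (gA a) \<cdot> gA [] = gA [] \<cdot> sh [False, True] (gA a)"
    using rel_abs[OF rel.r5[of A "[]" a]] by (simp add: gA.abs_eq gmult.abs_eq sh.abs_eq shw_def)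
qed

lemma c6: "sh [True, True] k \<cdot> gA [] = gA [] \<cdot> sh [True] k"
proof (rule conj1)
  fix a
  show "sh [True, True] (gS a) \<cdot> gA [] = gA [] \<cdot> sh [True] (gS a)"
    using rel_abs[OF rel.r6[of S "[]" a]] by (simp add: gS.abs_eq gA.abs_eq gmult.abs_eq sh.abs_eq shw_def)
  show "sh [True, True] (gA a) \<cdot> gA [] = gA [] \<cdot> sh [True] (gA a)"
    using rel_abs[OF rel.r6[of A "[]" a]] by (simp add: gA.abs_eq gmult.abs_eq sh.abs_eq shw_def)
qed

lemma r7: "gS [] \<cdot> (gS [True] \<cdot> gS []) = gS [True] \<cdot> (gS [] \<cdot> (gS [True] \<cdot> gS [False]))"
  using rel_abs[OF rel.r7[of "[]"]] by (simp add: gS.abs_eq gmult.abs_eq sh.abs_eq shw_def)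
lemma r8: "gS [] \<cdot> (gS [True] \<cdot> gA []) = gA [True] \<cdot> (gS [] \<cdot> gS [False])"
  using rel_abs[OF rel.r8[of "[]"]] by (simp add: gS.abs_eq gA.abs_eq gmult.abs_eq sh.abs_eq shw_def)
lemma r9: "gA [] \<cdot> gS [] = gS [True] \<cdot> (gS [] \<cdot> (gA [True] \<cdot> gA [False]))"
  using rel_abs[OF rel.r9[of "[]"]] by (simp add: gS.abs_eq gA.abs_eq gmult.abs_eq sh.abs_eq shw_def)


lemma tl: "a = b \<Longrightarrow> a \<cdot> z = b \<cdot> z" by simp
lemma swap_inv: "u \<cdot> c = c \<cdot> u \<Longrightarrow> c \<cdot> ginv u = ginv u \<cdot> c"
  using inv_conj[of u c u] by simp
lemma incFT: "incomparable [False] [True]" "incomparable [False, False] [True]"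
  "incomparable [False, True] [True]" "incomparable [False] [True, True]"
  by (auto simp: incomparable_def)

lemma F1: "sh [False] x \<cdot> sh [True] y = sh [True] y \<cdot> sh [False] x"
  using cm_sh[OF incFT(1)] .
lemma F2: "sh [False, False] x \<cdot> ginv (sh [True] y) = ginv (sh [True] y) \<cdot> sh [False, False] x"
  using cm_sh[OF incFT(2), of x "ginv y"] by simp
lemma F3: "sh [False, True] x \<cdot> ginv (sh [True] y) = ginv (sh [True] y) \<cdot> sh [False, True] x"
  using cm_sh[OF incFT(3), of x "ginv y"] by simp
lemma A0T: "gA [False] \<cdot> ginv (sh [True] y) = ginv (sh [True] y) \<cdot> gA [False]"
  using cm_sh[OF incFT(1), of "gA []" "ginv y"] by simp
lemma S0T: "gS [False] \<cdot> ginv (sh [True] y) = ginv (sh [True] y) \<cdot> gS [False]"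
  using cm_sh[OF incFT(1), of "gS []" "ginv y"] by simp
lemma A0TT: "gA [False] \<cdot> ginv (sh [True, True] y) = ginv (sh [True, True] y) \<cdot> gA [False]"
  using cm_sh[OF incFT(4), of "gA []" "ginv y"] by simp
lemma S0TT: "gS [False] \<cdot> ginv (sh [True, True] y) = ginv (sh [True, True] y) \<cdot> gS [False]"
  using cm_sh[OF incFT(4), of "gS []" "ginv y"] by simp
lemma A0A1: "gA [False] \<cdot> ginv (gA [True]) = ginv (gA [True]) \<cdot> gA [False]"
  using cm_sh[OF incFT(1), of "gA []" "ginv (gA [])"] by simp
lemma S0S1: "gS [False] \<cdot> ginv (gS [True]) = ginv (gS [True]) \<cdot> gS [False]"
  using cm_sh[OF incFT(1), of "gS []" "ginv (gS [])"] by simp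
lemma STT: "gS [] \<cdot> sh [True, True] y = sh [True, True] y \<cdot> gS []"
  using c3 by simp
lemma STTi: "gS [] \<cdot> ginv (sh [True, True] y) = ginv (sh [True, True] y) \<cdot> gS []"
  using c3[of "ginv y"] by simp
lemma ATT: "gA [] \<cdot> sh [True] y = sh [True, True] y \<cdot> gA []"
  using c6 by simp
lemma TTiA: "ginv (sh [True, True] y) \<cdot> gA [] = gA [] \<cdot> ginv (sh [True] y)"
  using c6[of "ginv y"] by simp

lemmas R = F1 F2 F3 A0T S0T A0TT S0TT A0A1 S0S1 STT STTi ATT TTiA c1 c2 c4 c5 r7 r8 r9
lemmas RT = R[THEN tl, simplified ga]


lemma i1s: "star (star g h) (star g k) = star g (star h k) \<cdot> gS [False]"
  by (simp add: star_def circ_def ga R RT)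
lemma i1c: "circ (star g h) (star g k) = star g (circ h k) \<cdot> gS [False]"
  by (simp add: star_def circ_def ga R RT)
lemma i2: "star (circ g h) k = star g (star h k) \<cdot> gA [False]"
  by (simp add: star_def circ_def ga R RT)
lemma i3s: "star (g \<cdot> sh [False] k) h = star g h \<cdot> sh [False, False] k"
  by (simp add: star_def circ_def ga R RT)
lemma i3c: "circ (g \<cdot> sh [False] k) h = circ g h \<cdot> sh [False, False] k"
  by (simp add: star_def circ_def ga R RT)
lemma i4s: "star g (h \<cdot> sh [False] k) = star g h \<cdot> sh [False, True] k"
  by (simp add: star_def circ_def ga R RT)
lemma i4c: "circ g (h \<cdot> sh [False] k) = circ g h \<cdot> sh [False, True] k"
  by (simp add: star_def circ_def ga R RT)


theorem lemma4p3:
  fixes g h k :: G_ALD and op :: "G_ALD \<Rightarrow> G_ALD \<Rightarrow> G_ALD"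
  assumes "op \<in> {star, circ}"
  shows "op (star g h) (star g k) = star g (op h k) \<cdot> gS [False]
     \<and> star (circ g h) k = star g (star h k) \<cdot> gA [False]
     \<and> op (g \<cdot> sh [False] k) h = op g h \<cdot> sh [False, False] k
     \<and> op g (h \<cdot> sh [False] k) = op g h \<cdot> sh [False, True] k"
  using assms i1s i1c i2 i3s i3c i4s i4c by auto

end
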